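(* Let $m\ge 2$ be an integer and let $n$ be a positive integer with $m^j\le n<m^{j+1}$ for some integer $j\ge 0$, with base $m$ representation $n=\alpha_j m^j+\cdots+\alpha_1 m+\alpha_0$ ($\alpha_j>0$, $0\le\alpha_i\le m-1$). For an $m$-ary partition $\lambda=(\lambda_\ell,\ldots,\lambda_0)$ of $n$ (so $n=\sum_{i=0}^\ell \lambda_i m^i$, $\lambda_\ell>0$, $\lambda_i\ge 0$), setting $\lambda_k=0$ for $\ell<k\le j$, define $\varphi(\lambda)=(\beta_j,\beta_{j-1},\ldots,\beta_1)$ by \[ \beta_i=\sum_{k=i}^{j}m^{k-i}(\alpha_k-\lambda_k),\qquad 1\le i\le j. \] Then $\varphi$ is a bijection from the set $\mathcal{B}_m(n)$ of $m$-ary partitions of $n$ onto the set \[ \mathcal{S}_m(n)=\{(\beta_j,\ldots,\beta_1)\in\mathbb{Z}^j:\,0\le\beta_j\le\alpha_j\text{ and }0\le\beta_t\le\alpha_t+m\beta_{t+1}\text{ for }1\le t\le j-1\}. \]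
   Context: An $m$-ary partition of $n$ is a partition of $n$ into powers of $m$, encoded as the sequence $(\lambda_\ell,\ldots,\lambda_0)$ of multiplicities, where $\lambda_i$ is the number of parts equal to $m^i$, $\lambda_\ell>0$ and $\lambda_i\ge0$; necessarily $\ell\le j$. $\mathcal{B}_m(n)$ is the set of all such partitions. *)

theory Defs
  imports Main
begin

text \<open>An m-ary partition of n, encoded by its multiplicity function:
  lam i = number of parts equal to m^i (finitely supported).  The sequence
  (lam_l,...,lam_0) with lam_l > 0 corresponds to lam with l the largest index
  of the support.\<close>
definition mary_partitions :: "nat \<Rightarrow> nat \<Rightarrow> (nat \<Rightarrow> nat) set" where
  "mary_partitions m n =
     {lam. finite {i. lam i \<noteq> 0} \<and> (\<Sum>i\<in>{i. lam i \<noteq> 0}. lam i * m ^ i) = n}"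

definition digit :: "nat \<Rightarrow> nat \<Rightarrow> nat \<Rightarrow> nat" where
  "digit m n i = (n div m ^ i) mod m"

text \<open>The map phi; a tuple (beta_j,...,beta_1) in Z^j is encoded as a function
  nat => int which is zero outside {1..j}.\<close>
definition phi :: "nat \<Rightarrow> nat \<Rightarrow> nat \<Rightarrow> (nat \<Rightarrow> nat) \<Rightarrow> (nat \<Rightarrow> int)" where
  "phi m n j lam = (\<lambda>i. if 1 \<le> i \<and> i \<le> j
       then (\<Sum>k=i..j. int m ^ (k - i) * (int (digit m n k) - int (lam k)))
       else 0)"

definition S_set :: "nat \<Rightarrow> nat \<Rightarrow> nat \<Rightarrow> (nat \<Rightarrow> int) set" where
  "S_set m n j = {beta. (\<forall>i. \<not> (1 \<le> i \<and> i \<le> j) \<longrightarrow> beta i = 0)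
      \<and> (1 \<le> j \<longrightarrow> 0 \<le> beta j \<and> beta j \<le> int (digit m n j))
      \<and> (\<forall>t. 1 \<le> t \<and> t \<le> j - 1 \<longrightarrow>
             0 \<le> beta t \<and> beta t \<le> int (digit m n t) + int m * beta (t + 1))}"

end

theory Submission
  imports Defs
begin

definition Pf :: "nat \<Rightarrow> nat \<Rightarrow> nat \<Rightarrow> (nat \<Rightarrow> nat) \<Rightarrow> nat \<Rightarrow> int" where
  "Pf m n j lam i = (\<Sum>k=i..j. int m ^ (k - i) * (int (digit m n k) - int (lam k)))"

lemma digits_mod: "n mod m ^ k = (\<Sum>i<k. digit m n i * m ^ i)"
proof (induction k)
  case 0 then show ?case by simp
next
  case (Suc k)
  have "n mod m ^ Suc k = n mod (m ^ k * m)" by (simp only: power_Suc2)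
  also have "\<dots> = m ^ k * (n div m ^ k mod m) + n mod m ^ k" by (rule mod_mult2_eq)
  finally show ?case using Suc by (simp add: digit_def mult.commute)
qed

lemma Pf_rec:
  assumes "i \<le> j"
  shows "Pf m n j lam i = (int (digit m n i) - int (lam i)) + int m * Pf m n j lam (Suc i)"
proof -
  have e: "{i..j} = insert i {Suc i..j}" using assms by auto
  have "Pf m n j lam i = (int (digit m n i) - int (lam i)) +
      (\<Sum>k=Suc i..j. int m ^ (k - i) * (int (digit m n k) - int (lam k)))"
    unfolding Pf_def e by simp
  also have "(\<Sum>k=Suc i..j. int m ^ (k - i) * (int (digit m n k) - int (lam k)))
     = (\<Sum>k=Suc i..j. int m * (int m ^ (k - Suc i) * (int (digit m n k) - int (lam k))))"
  proof (rule sum.cong)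
    fix k assume "k \<in> {Suc i..j}"
    then have "k - i = Suc (k - Suc i)" by auto
    then show "int m ^ (k - i) * (int (digit m n k) - int (lam k))
       = int m * (int m ^ (k - Suc i) * (int (digit m n k) - int (lam k)))" by simp
  qed simp
  also have "\<dots> = int m * Pf m n j lam (Suc i)"
    unfolding Pf_def by (simp add: sum_distrib_left)
  finally show ?thesis .
qed

lemma Pf_big: "i > j \<Longrightarrow> Pf m n j lam i = 0"
  unfolding Pf_def by simp

lemma Pf_tele:
  assumes "t \<le> Suc j"
  shows "Pf m n j lam 0 = (\<Sum>k<t. (int (digit m n k) - int (lam k)) * int m ^ k)
       + int m ^ t * Pf m n j lam t"
  using assms
proof (induction t)
  case 0 then show ?case by simp
next
  case (Suc t)
  then have "t \<le> j" by simp
  have E: "Pf m n j lam t = (int (digit m n t) - int (lam t)) + int m * Pf m n j lam (Suc t)"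
    by (rule Pf_rec[OF \<open>t \<le> j\<close>])
  have "int m ^ t * Pf m n j lam t = (int (digit m n t) - int (lam t)) * int m ^ t
      + int m ^ Suc t * Pf m n j lam (Suc t)"
    unfolding E by (simp add: algebra_simps)
  with Suc show ?case by simp
qed

lemma mem_iff:
  assumes "m \<ge> 2" "n < m ^ (j + 1)"
  shows "lam \<in> mary_partitions m n \<longleftrightarrow>
     (\<forall>k>j. lam k = 0) \<and> (\<Sum>k<Suc j. lam k * m ^ k) = n"
proof
  assume A: "lam \<in> mary_partitions m n"
  let ?S = "{i. lam i \<noteq> 0}"
  have fin: "finite ?S" and s: "(\<Sum>i\<in>?S. lam i * m ^ i) = n"
    using A unfolding mary_partitions_def by auto
  have z: "lam k = 0" if "k > j" for k
  proof (rule ccontr)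
    assume "lam k \<noteq> 0"
    then have "k \<in> ?S" by simp
    then have "lam k * m ^ k \<le> n" using member_le_sum[OF _ _ fin, of k "\<lambda>i. lam i * m ^ i"] s
      by simp
    moreover have "m ^ k \<le> lam k * m ^ k" using \<open>lam k \<noteq> 0\<close> by simp
    moreover have "m ^ (j+1) \<le> m ^ k" using that assms(1) by (intro power_increasing) auto
    ultimately show False using assms(2) by linarith
  qed
  have "?S \<subseteq> {..<Suc j}"
  proof
    fix x assume "x \<in> ?S"
    then have "\<not> x > j" using z by auto
    then show "x \<in> {..<Suc j}" by simp
  qed
  then have "(\<Sum>i\<in>?S. lam i * m ^ i) = (\<Sum>k<Suc j. lam k * m ^ k)"
    by (intro sum.mono_neutral_left) auto
  with s z show "(\<forall>k>j. lam k = 0) \<and> (\<Sum>k<Suc j. lam k * m ^ k) = n" by simp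
next
  assume B: "(\<forall>k>j. lam k = 0) \<and> (\<Sum>k<Suc j. lam k * m ^ k) = n"
  let ?S = "{i. lam i \<noteq> 0}"
  have sub: "?S \<subseteq> {..<Suc j}"
  proof
    fix x assume "x \<in> ?S"
    then have "\<not> x > j" using B by auto
    then show "x \<in> {..<Suc j}" by simp
  qed
  then have fin: "finite ?S" by (rule finite_subset) simp
  have "(\<Sum>i\<in>?S. lam i * m ^ i) = (\<Sum>k<Suc j. lam k * m ^ k)"
    using sub by (intro sum.mono_neutral_left) auto
  with B fin show "lam \<in> mary_partitions m n" unfolding mary_partitions_def by simp
qed

lemma n_digits:
  assumes "n < m ^ (j + 1)"
  shows "n = (\<Sum>k<Suc j. digit m n k * m ^ k)"
  using digits_mod[of n m "Suc j"] assms by simp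

lemma Pf0:
  assumes "n < m ^ (j + 1)"
  shows "Pf m n j lam 0 = int n - int (\<Sum>k<Suc j. lam k * m ^ k)"
proof -
  have "Pf m n j lam 0 = (\<Sum>k<Suc j. (int (digit m n k) - int (lam k)) * int m ^ k)"
    using Pf_tele[of "Suc j" j m n lam] Pf_big[of j "Suc j"] by simp
  also have "\<dots> = int (\<Sum>k<Suc j. digit m n k * m ^ k) - int (\<Sum>k<Suc j. lam k * m ^ k)"
    by (simp add: algebra_simps sum_subtractf)
  also have "int (\<Sum>k<Suc j. digit m n k * m ^ k) = int n"
    using n_digits[OF assms] by simp
  finally show ?thesis .
qed


lemma phi_Pf: "phi m n j lam i = (if 1 \<le> i \<and> i \<le> j then Pf m n j lam i else 0)"
  unfolding phi_def Pf_def by simp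

lemma Pf_nonneg:
  assumes m: "m \<ge> 2" and P0: "Pf m n j lam 0 = 0" and t: "t \<le> Suc j"
  shows "Pf m n j lam t \<ge> 0"
proof -
  have T: "0 = (\<Sum>k<t. (int (digit m n k) - int (lam k)) * int m ^ k) + int m ^ t * Pf m n j lam t"
    using Pf_tele[OF t, of m n lam] P0 by simp
  have "(\<Sum>k<t. (int (digit m n k) - int (lam k)) * int m ^ k)
     = int (\<Sum>k<t. digit m n k * m ^ k) - int (\<Sum>k<t. lam k * m ^ k)"
    by (simp add: algebra_simps sum_subtractf)
  also have "int (\<Sum>k<t. digit m n k * m ^ k) = int (n mod m ^ t)"
    using digits_mod[of n m t] by simp
  finally have "int m ^ t * Pf m n j lam t = int (\<Sum>k<t. lam k * m ^ k) - int (n mod m ^ t)"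
    using T by linarith
  moreover have "int (n mod m ^ t) < int m ^ t"
  proof -
    have "n mod m ^ t < m ^ t" using m by (intro mod_less_divisor) simp
    then show ?thesis by (metis of_nat_less_iff of_nat_power)
  qed
  ultimately have "int m ^ t * Pf m n j lam t > - (int m ^ t)" by linarith
  moreover have "int m ^ t > 0" using m by simp
  ultimately show ?thesis
    by (smt (verit) mult_le_cancel_left1 mult_minus_right)
qed

theorem theorem2p2:
  fixes m n j :: nat
  assumes "m \<ge> 2" and "n > 0" and "m ^ j \<le> n" and "n < m ^ (j + 1)"
  shows "bij_betw (phi m n j) (mary_partitions m n) (S_set m n j)"
proof -
  note m = assms(1) and nb = assms(4)
  have part_P0: "Pf m n j lam 0 = 0" if "lam \<in> mary_partitions m n" for lam
    using that mem_iff[OF m nb] Pf0[OF nb, of lam] by simp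
  have part_big: "lam k = 0" if "lam \<in> mary_partitions m n" "k > j" for lam k
    using that mem_iff[OF m nb] by blast
  have inj: "inj_on (phi m n j) (mary_partitions m n)"
  proof (rule inj_onI)
    fix lam lam' assume A: "lam \<in> mary_partitions m n" and A': "lam' \<in> mary_partitions m n"
      and E: "phi m n j lam = phi m n j lam'"
    have PE: "Pf m n j lam i = Pf m n j lam' i" for i
    proof -
      consider "i = 0" | "1 \<le> i \<and> i \<le> j" | "i > j" by linarith
      then show ?thesis
      proof cases
        case 1 then show ?thesis using part_P0[OF A] part_P0[OF A'] by simp
      next
        case 2 then show ?thesis using fun_cong[OF E, of i] by (simp add: phi_Pf)
      next
        case 3 then show ?thesis by (simp add: Pf_big)
      qed
    qed
    show "lam = lam'"
    proof
      fix k
      show "lam k = lam' k"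
      proof (cases "k \<le> j")
        case True
        from Pf_rec[OF True, of m n lam] Pf_rec[OF True, of m n lam'] PE[of k] PE[of "Suc k"]
        show ?thesis by simp
      next
        case False
        then show ?thesis using part_big[OF A] part_big[OF A'] by simp
      qed
    qed
  qed
  have sub: "phi m n j lam \<in> S_set m n j" if A: "lam \<in> mary_partitions m n" for lam
  proof -
    have nn: "Pf m n j lam t \<ge> 0" if "t \<le> Suc j" for t
      using Pf_nonneg[OF m part_P0[OF A] that] .
    have c1: "0 \<le> phi m n j lam j \<and> phi m n j lam j \<le> int (digit m n j)" if "1 \<le> j"
    proof -
      have "Pf m n j lam j = int (digit m n j) - int (lam j)"
        using Pf_rec[of j j m n lam] Pf_big[of j "Suc j"] by simp
      then show ?thesis using that nn[of j] by (simp add: phi_Pf)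
    qed
    have c2: "0 \<le> phi m n j lam t \<and> phi m n j lam t \<le> int (digit m n t) + int m * phi m n j lam (t + 1)"
      if "1 \<le> t \<and> t \<le> j - 1" for t
    proof -
      have tj: "t \<le> j" "1 \<le> t + 1 \<and> t + 1 \<le> j" using that by auto
      have "Pf m n j lam t \<le> int (digit m n t) + int m * Pf m n j lam (Suc t)"
        using Pf_rec[OF tj(1), of m n lam] by simp
      then show ?thesis using that tj nn[of t] by (simp add: phi_Pf)
    qed
    show ?thesis unfolding S_set_def using c1 c2 by (simp add: phi_Pf)
  qed
  have sup: "beta \<in> phi m n j ` mary_partitions m n" if B: "beta \<in> S_set m n j" for beta
  proof -
    have out: "beta i = 0" if "\<not> (1 \<le> i \<and> i \<le> j)" for i
      using B that unfolding S_set_def by blast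
    have bj: "1 \<le> j \<longrightarrow> 0 \<le> beta j \<and> beta j \<le> int (digit m n j)"
      using B unfolding S_set_def by blast
    have bt: "0 \<le> beta t \<and> beta t \<le> int (digit m n t) + int m * beta (t + 1)"
      if "1 \<le> t \<and> t \<le> j - 1" for t
      using B that unfolding S_set_def by blast
    have bnn: "beta i \<ge> 0" for i
    proof -
      consider "\<not> (1 \<le> i \<and> i \<le> j)" | "i = j \<and> 1 \<le> j" | "1 \<le> i \<and> i \<le> j - 1" by linarith
      then show ?thesis
      proof cases
        case 1 then show ?thesis using out by simp
      next
        case 2 then show ?thesis using bj by simp
      next
        case 3 then show ?thesis using bt by simp
      qed
    qed
    define f where "f k = (if k = 0 then int (digit m n 0) + int m * beta 1
       else if k \<le> j then int (digit m n k) + int m * beta (Suc k) - beta k else 0)" for k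
    define lam where "lam k = nat (f k)" for k
    have fnn: "f k \<ge> 0" for k
    proof -
      consider "k = 0" | "1 \<le> k \<and> k \<le> j - 1" | "k = j \<and> 1 \<le> j" | "k > j" by linarith
      then show ?thesis
      proof cases
        case 1 then show ?thesis using bnn[of 1] unfolding f_def by simp
      next
        case 2 then show ?thesis using bt[of k] unfolding f_def by auto
      next
        case 3 then show ?thesis using bj out[of "Suc j"] unfolding f_def by auto
      qed (simp add: f_def)
    qed
    have lf: "int (lam k) = f k" for k unfolding lam_def using fnn[of k] by simp
    have PB: "Pf m n j lam i = beta i" if "1 \<le> i" "i \<le> Suc j" for i
      using that(2)
    proof (induction rule: inc_induct)
      case base then show ?case using Pf_big[of j "Suc j"] out[of "Suc j"] by simp
    next
      case (step k)
      then have kj: "k \<le> j" by simp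
      have "k \<noteq> 0" using step.hyps that(1) by simp
      then show ?case using Pf_rec[OF kj, of m n lam] step.IH lf[of k] kj unfolding f_def
        by simp
    qed
    have P0: "Pf m n j lam 0 = 0"
      using Pf_rec[of 0 j m n lam] PB[of 1] lf[of 0] unfolding f_def by simp
    have big: "\<forall>k>j. lam k = 0" unfolding lam_def f_def by simp
    have "int n - int (\<Sum>k<Suc j. lam k * m ^ k) = 0" using P0 Pf0[OF nb, of lam] by simp
    then have "int (\<Sum>k<Suc j. lam k * m ^ k) = int n" by linarith
    then have "(\<Sum>k<Suc j. lam k * m ^ k) = n" by (simp only: of_nat_eq_iff)
    with big have mem: "lam \<in> mary_partitions m n" using mem_iff[OF m nb] by blast
    have "phi m n j lam = beta"
    proof
      fix i show "phi m n j lam i = beta i"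
        using PB[of i] out[of i] by (simp add: phi_Pf)
    qed
    with mem show ?thesis by blast
  qed
  show ?thesis unfolding bij_betw_def using inj sub sup by blast
qed

end
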